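(* Let $(W_t)_{t\ge 0}$ be a standard Wiener process (Brownian motion) and let $\varepsilon>0$. Then, almost surely, the path $t\mapsto W_t$, $t\in[0,1]$, belongs to $A(\varepsilon)$, i.e. $\|W_\cdot\|_{A(\varepsilon)}<\infty$ almost surely, where $$\|f\|_{A(\varepsilon)}:=\sup_{j\in\mathbb{N}_0}\ \sup_{0\le k\le j}\ \sup_{0<t<1}\ \frac{2^{(j-k)/2}}{(j-k+1)^{\varepsilon}}\cdot\frac{(A_kf_j)^*(t)}{\sqrt{\log(1/t)+1}}$$ for $f\in C([0,1])$.
   Context: Let $I=[0,1]$. For $j\in\mathbb{N}_0$ and $m\in\{0,\dots,2^j-1\}$ let $I_{j,m}=[m2^{-j},(m+1)2^{-j}]$ and let $\chi_{j,m}$ be its indicator function. For $f\in C(I)$ define the (Faber) coefficients $$\lambda_{j,m}=\lambda_{j,m}(f)=-2^{j/2-1}\Big(f\big((m+1)2^{-j}\big)-2f\big((2m+1)2^{-j-1}\big)+f\big(m2^{-j}\big)\Big),$$ which are the coefficients of the uniformly convergent expansion $f(x)=f(0)(1-x)+f(1)x+\sum_{j\ge0}\sum_{m=0}^{2^j-1}2^{-j/2}\lambda_{j,m}v_{j,m}(x)$, where $v_{j,m}$ is the hat function supported on $I_{j,m}$, piecewise linear, equal to $0$ at the endpoints of $I_{j,m}$ and $1$ at its midpoint. Put $f_j=\sum_{m=0}^{2^j-1}\lambda_{j,m}\chi_{j,m}$. For integrable $g$ on $I$ and $k\in\mathbb{N}_0$, $(A_kg)(x)=\sum_{l=0}^{2^k-1}2^k\int_{I_{k,l}}g(t)\,dt\cdot\chi_{k,l}(x)$.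 For a measurable $h$ on $I$, $h^*(t)=\inf\{s\ge0: |\{x\in I:|h(x)|>s\}|\le t\}$ denotes the non-increasing rearrangement ($|\cdot|$ is Lebesgue measure). *)

theory Defs
  imports "HOL-Probability.Probability"
begin

definition wiener_process :: "'a measure \<Rightarrow> (real \<Rightarrow> 'a \<Rightarrow> real) \<Rightarrow> bool" where
  "wiener_process M W \<longleftrightarrow>
     prob_space M \<and>
     (\<forall>t\<ge>0. W t \<in> borel_measurable M) \<and>
     (AE \<omega> in M. W 0 \<omega> = 0) \<and>
     (AE \<omega> in M. continuous_on {0..} (\<lambda>t. W t \<omega>)) \<and>
     (\<forall>s t. 0 \<le> s \<and> s < t \<longrightarrow>
        distributed M lborel (\<lambda>\<omega>. W t \<omega> - W s \<omega>)
          (\<lambda>x. ennreal (normal_density 0 (sqrt (t - s)) x))) \<and>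
     (\<forall>(ts :: nat \<Rightarrow> real) n. 0 \<le> ts 0 \<and> (\<forall>i<n. ts i < ts (Suc i)) \<longrightarrow>
        prob_space.indep_vars M (\<lambda>_. borel) (\<lambda>i \<omega>. W (ts (Suc i)) \<omega> - W (ts i) \<omega>) {..<n})"

definition dyad :: "nat \<Rightarrow> nat \<Rightarrow> real set" where
  "dyad j m = {real m / 2 ^ j .. (real m + 1) / 2 ^ j}"

definition faber_coeff :: "(real \<Rightarrow> real) \<Rightarrow> nat \<Rightarrow> nat \<Rightarrow> real" where
  "faber_coeff f j m = - (2 powr (real j / 2 - 1)) *
     (f ((real m + 1) / 2 ^ j) - 2 * f ((2 * real m + 1) / 2 ^ (j + 1)) + f (real m / 2 ^ j))"

definition faber_level :: "(real \<Rightarrow> real) \<Rightarrow> nat \<Rightarrow> real \<Rightarrow> real" where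
  "faber_level f j x = (\<Sum>m<2 ^ j. faber_coeff f j m * indicator (dyad j m) x)"

definition dyad_avg :: "nat \<Rightarrow> (real \<Rightarrow> real) \<Rightarrow> real \<Rightarrow> real" where
  "dyad_avg k g x = (\<Sum>l<2 ^ k. 2 ^ k * integral (dyad k l) g * indicator (dyad k l) x)"

definition rearr :: "(real \<Rightarrow> real) \<Rightarrow> real \<Rightarrow> real" where
  "rearr h t = Inf {s. s \<ge> 0 \<and> measure lborel {x \<in> {0..1}. \<bar>h x\<bar> > s} \<le> t}"

definition A_norm :: "real \<Rightarrow> (real \<Rightarrow> real) \<Rightarrow> ereal" where
  "A_norm eps f = (SUP j. SUP k \<in> {0..j}. SUP t \<in> {0<..<1}.
     ereal (2 powr ((real j - real k) / 2) / (real j - real k + 1) powr eps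
            * rearr (dyad_avg k (faber_level f j)) t / sqrt (ln (1 / t) + 1)))"

end

theory Submission imports Defs begin

lemma measure_Icc_degen: "y \<le> x \<Longrightarrow> measure lebesgue {x..y::real} = 0"
  by (cases "x = y") auto

lemma dyad_Int_measure:
  fixes j k l m :: nat
  assumes "k \<le> j"
  shows "measure lebesgue (dyad j m \<inter> dyad k l) =
    (if l*2^(j-k) \<le> m \<and> m < (l+1)*2^(j-k) then 1/2^j else 0)"
proof -
  define d where "d = j - k"
  define P :: real where "P = 2^d"
  have jd: "j = k + d" using assms d_def by simp
  have P: "(2::real)^j = 2^k * P" unfolding P_def jd by (simp add: power_add)
  have Ppos: "P > 0" unfolding P_def by simp
  have kpos: "(2::real)^k > 0" by simp
  let ?a1 = "real m / 2^j" and ?b1 = "(real m + 1) / 2^j"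
  let ?a2 = "real l / 2^k" and ?b2 = "(real l + 1) / 2^k"
  have int: "dyad j m \<inter> dyad k l = {max ?a1 ?a2 .. min ?b1 ?b2}"
    unfolding dyad_def by auto
  have e1: "?a2 = real l * P / 2^j" and e2: "?b2 = (real l + 1) * P / 2^j"
    using Ppos kpos by (simp_all add: P field_simps)
  have Pnat: "P = real (2^d)" unfolding P_def by simp
  show ?thesis
  proof (cases "l*2^(j-k) \<le> m \<and> m < (l+1)*2^(j-k)")
    case True
    then have n1: "l*2^d \<le> m" and n2: "m+1 \<le> (l+1)*2^d" using d_def by auto
    have "real (l*2^d) \<le> real m" "real (m+1) \<le> real ((l+1)*2^d)" using n1 n2 of_nat_le_iff by blast+
    then have "real l * P \<le> real m" "real m + 1 \<le> (real l + 1) * P"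
      unfolding Pnat by (simp_all add: algebra_simps)
    then have "max ?a1 ?a2 = ?a1" "min ?b1 ?b2 = ?b1" unfolding e1 e2
      by (auto simp: max_def min_def divide_le_cancel)
    then show ?thesis using True by (simp add: int divide_le_cancel diff_divide_distrib[symmetric])
  next
    case False
    then have "m+1 \<le> l*2^d \<or> (l+1)*2^d \<le> m" using d_def by auto
    then have "real (m+1) \<le> real (l*2^d) \<or> real ((l+1)*2^d) \<le> real m" using of_nat_le_iff by blast
    then have "real m + 1 \<le> real l * P \<or> (real l + 1) * P \<le> real m"
      unfolding Pnat by (simp add: algebra_simps)
    then have "min ?b1 ?b2 \<le> max ?a1 ?a2" unfolding e1 e2
      by (auto simp: max_def min_def divide_le_cancel)
    then have "measure lebesgue (dyad j m \<inter> dyad k l) = 0" unfolding int by (rule measure_Icc_degen)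
    then show ?thesis using False by simp
  qed
qed

lemma has_integral_dyad_indicator:
  fixes j k l m :: nat
  assumes "k \<le> j"
  shows "((indicator (dyad j m) :: real \<Rightarrow> real) has_integral
    (if l*2^(j-k) \<le> m \<and> m < (l+1)*2^(j-k) then 1/2^j else 0)) (dyad k l)"
proof -
  have "dyad j m \<inter> dyad k l = cbox (max (real m / 2^j) (real l / 2^k)) (min ((real m+1)/2^j) ((real l+1)/2^k))"
    by (simp add: dyad_def cbox_interval)
  then have lm: "dyad j m \<inter> dyad k l \<in> lmeasurable" by simp
  then have "(indicator (dyad j m) :: real \<Rightarrow> real) integrable_on (dyad k l)"
    using integrable_on_indicator by blast
  from integrable_integral[OF this] show ?thesis
    unfolding integral_indicator[OF lm] dyad_Int_measure[OF assms] .
qed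

lemma integral_faber_level:
  fixes j k l :: nat
  assumes "k \<le> j" "l < 2^k"
  shows "integral (dyad k l) (faber_level f j) =
    (\<Sum>m\<in>{l*2^(j-k)..<(l+1)*2^(j-k)}. faber_coeff f j m) / 2^j"
proof -
  let ?P = "\<lambda>m. l*2^(j-k) \<le> m \<and> m < (l+1)*2^(j-k)"
  have "(faber_level f j has_integral
      (\<Sum>m<2^j. faber_coeff f j m * (if ?P m then 1/2^j else 0))) (dyad k l)"
    unfolding faber_level_def
    by (intro has_integral_sum has_integral_mult_right has_integral_dyad_indicator assms) auto
  then have "integral (dyad k l) (faber_level f j) =
      (\<Sum>m<2^j. faber_coeff f j m * (if ?P m then 1/2^j else 0))"
    by (rule integral_unique)
  also have "\<dots> = (\<Sum>m<2^j. if ?P m then faber_coeff f j m / 2^j else 0)"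
    by (intro sum.cong) auto
  also have "\<dots> = (\<Sum>m\<in>{m\<in>{..<2^j}. ?P m}. faber_coeff f j m / 2^j)"
    by (rule sum.inter_filter[symmetric]) simp
  also have "{m\<in>{..<2^j}. ?P m} = {l*2^(j-k)..<(l+1)*2^(j-k)}"
  proof -
    have "(l+1)*2^(j-k) \<le> (2::nat)^k * 2^(j-k)"
      using assms(2) by (intro mult_right_mono) auto
    also have "\<dots> = 2^j" using assms(1) by (simp flip: power_add)
    finally have b: "(l+1)*2^(j-k) \<le> (2::nat)^j" .
    show ?thesis
    proof (intro set_eqI iffI)
      fix m assume "m \<in> {l*2^(j-k)..<(l+1)*2^(j-k)}"
      then show "m \<in> {m\<in>{..<2^j}. ?P m}" using b by simp
    qed simp
  qed
  finally show ?thesis by (simp add: sum_divide_distrib)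
qed

lemma dyad_avg_eq:
  fixes k l :: nat and x :: real
  assumes "l < 2^k" "real l < x * 2^k" "x * 2^k < real l + 1"
  shows "dyad_avg k g x = 2^k * integral (dyad k l) g"
proof -
  have ind: "indicator (dyad k l') x = (if l' = l then 1 else (0::real))" for l'
  proof -
    have "x \<in> dyad k l' \<longleftrightarrow> real l' \<le> x * 2^k \<and> x * 2^k \<le> real l' + 1"
      unfolding dyad_def by (simp add: field_simps)
    also have "\<dots> \<longleftrightarrow> l' = l"
    proof
      assume a: "real l' \<le> x * 2^k \<and> x * 2^k \<le> real l' + 1"
      then have "real l' < real l + 1" "real l < real l' + 1" using assms by linarith+
      then show "l' = l" by linarith
    next
      assume "l' = l" then show "real l' \<le> x * 2^k \<and> x * 2^k \<le> real l' + 1" using assms by simp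
    qed
    finally show ?thesis by (simp add: indicator_def)
  qed
  have "dyad_avg k g x = (\<Sum>l'<2^k. if l' = l then 2^k * integral (dyad k l) g else 0)"
    unfolding dyad_avg_def ind by (intro sum.cong) auto
  also have "\<dots> = 2^k * integral (dyad k l) g" using assms(1) by simp
  finally show ?thesis .
qed

lemma measure_level_bound:
  fixes k :: nat and s :: real and g :: "real \<Rightarrow> real"
  defines "L \<equiv> {l\<in>{..<2^k}. s < \<bar>2^k * integral (dyad k l) g\<bar>}"
  shows "measure lborel {x\<in>{0..1}. s < \<bar>dyad_avg k g x\<bar>} \<le> real (card L) / 2^k"
proof -
  let ?A = "{x\<in>{0..1}. s < \<bar>dyad_avg k g x\<bar>}"
  define D where "D = range (\<lambda>n::nat. real n / 2^k)"
  have Dnull: "D \<in> null_sets lborel" unfolding D_def by (intro countable_imp_null_set_lborel) auto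
  have Dm: "D \<in> sets borel" using Dnull by (auto simp: null_sets_def)
  have sub: "?A \<subseteq> (\<Union>l\<in>L. dyad k l) \<union> D"
  proof
    fix x assume xA: "x \<in> ?A"
    show "x \<in> (\<Union>l\<in>L. dyad k l) \<union> D"
    proof (cases "x \<in> D")
      case False
      define l where "l = nat \<lfloor>x * 2^k\<rfloor>"
      have x01: "0 \<le> x" "x \<le> 1" using xA by auto
      have ne: "x * 2^k \<noteq> real n" for n
      proof
        assume "x * 2^k = real n"
        then have "x = real n / 2^k" by (simp add: field_simps)
        then show False using False unfolding D_def by auto
      qed
      have "x \<noteq> 1" using ne[of "2^k"] by auto
      then have x1: "x < 1" using x01 by simp
      have fl0: "0 \<le> \<lfloor>x * 2^k\<rfloor>" using x01 by simp
      have lx: "real l \<le> x * 2^k" unfolding l_def using fl0 by linarith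
      then have lx': "real l < x * 2^k" using ne[of l] by linarith
      have xl: "x * 2^k < real l + 1" unfolding l_def using fl0 by linarith
      have "x * 2^k < 2^k" using x1 by simp
      then have "real l < 2^k" using lx by linarith
      then have lk: "l < 2^k" by (metis of_nat_less_numeral_power_cancel_iff)
      have "dyad_avg k g x = 2^k * integral (dyad k l) g"
        by (rule dyad_avg_eq[OF lk lx' xl])
      then have "l \<in> L" using xA lk unfolding L_def by auto
      moreover have "x \<in> dyad k l" unfolding dyad_def using lx xl by (simp add: field_simps)
      ultimately show ?thesis by blast
    qed simp
  qed
  have "emeasure lborel ?A \<le> emeasure lborel ((\<Union>l\<in>L. dyad k l) \<union> D)"
    by (rule emeasure_mono[OF sub]) (use Dm in \<open>auto simp: dyad_def\<close>)
  also have "\<dots> \<le> emeasure lborel (\<Union>l\<in>L. dyad k l) + emeasure lborel D"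
    by (rule emeasure_subadditive) (use Dm in \<open>auto simp: dyad_def\<close>)
  also have "emeasure lborel D = 0" using Dnull by auto
  also have "emeasure lborel (\<Union>l\<in>L. dyad k l) \<le> (\<Sum>l\<in>L. emeasure lborel (dyad k l))"
    by (rule emeasure_subadditive_finite) (auto simp: L_def dyad_def)
  also have "\<dots> = (\<Sum>l\<in>L. ennreal (1 / 2^k))"
    by (intro sum.cong refl) (simp add: dyad_def emeasure_lborel_Icc_eq field_simps diff_divide_distrib[symmetric])
  also have "\<dots> = ennreal (real (card L) / 2^k)"
    by (simp add: ennreal_of_nat_eq_real_of_nat ennreal_mult'[symmetric])
  finally have "emeasure lborel ?A \<le> ennreal (real (card L) / 2^k)" by simp
  then show ?thesis unfolding measure_def
    by (intro enn2real_leI) auto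
qed

lemma rearr_le:
  assumes "0 \<le> s" "measure lborel {x\<in>{0..1}. s < \<bar>h x\<bar>} \<le> t"
  shows "rearr h t \<le> s"
  unfolding rearr_def
  by (rule cInf_lower) (use assms in \<open>auto intro!: bdd_belowI[where m=0]\<close>)

lemma sum_pairs:
  fixes g :: "nat \<Rightarrow> real"
  shows "(\<Sum>m\<in>{a..<b}. g (2*m) - g (2*m+1)) = (\<Sum>i\<in>{2*a..<2*b}. (-1)^i * g i)"
proof (induction b)
  case 0 then show ?case by simp
next
  case (Suc b)
  show ?case
  proof (cases "a \<le> b")
    case True
    have e: "2 * Suc b = Suc (Suc (2*b))" by simp
    show ?thesis unfolding e using True Suc by (simp add: sum.op_ivl_Suc)
  next
    case False
    then show ?thesis by simp
  qed
qed

definition incr :: "(real \<Rightarrow> real) \<Rightarrow> nat \<Rightarrow> nat \<Rightarrow> real" where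
  "incr f j i = f (real (i+1) / 2^(j+1)) - f (real i / 2^(j+1))"

lemma faber_coeff_incr:
  "faber_coeff f j m = 2 powr (real j / 2 - 1) * (incr f j (2*m) - incr f j (2*m+1))"
proof -
  have a: "(real m + 1) / 2^j = real (2*m+1+1) / 2^(j+1)" by (simp add: field_simps)
  have b: "real m / 2^j = real (2*m) / 2^(j+1)" by (simp add: field_simps)
  have c: "(2 * real m + 1) / 2 ^ (j + 1) = real (2*m+1) / 2^(j+1)" by simp
  show ?thesis unfolding faber_coeff_def incr_def a b c by (simp add: algebra_simps)
qed

lemma block_sum:
  "(\<Sum>m\<in>{l*2^d..<(l+1)*2^d}. faber_coeff f j m) =
    2 powr (real j / 2 - 1) * (\<Sum>i\<in>{l*2^(d+1)..<(l+1)*2^(d+1)}. (-1)^i * incr f j i)"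
proof -
  have "(\<Sum>m\<in>{l*2^d..<(l+1)*2^d}. faber_coeff f j m) =
     2 powr (real j / 2 - 1) * (\<Sum>m\<in>{l*2^d..<(l+1)*2^d}. incr f j (2*m) - incr f j (2*m+1))"
    unfolding faber_coeff_incr by (simp add: sum_distrib_left)
  also have "(\<Sum>m\<in>{l*2^d..<(l+1)*2^d}. incr f j (2*m) - incr f j (2*m+1)) =
      (\<Sum>i\<in>{2*(l*2^d)..<2*((l+1)*2^d)}. (-1)^i * incr f j i)"
    by (rule sum_pairs)
  finally show ?thesis by (simp add: mult.commute mult.left_commute)
qed

lemma dyadic_index:
  fixes y :: real assumes "1 \<le> y" shows "\<exists>i. 2^i \<le> y \<and> y < 2^(i+1)"
proof -
  have "1 \<le> nat \<lfloor>y\<rfloor>" using assms by linarith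
  then obtain i where i: "2^i \<le> nat \<lfloor>y\<rfloor>" "nat \<lfloor>y\<rfloor> < 2^(i+1)"
    using ex_power_ivl1[of 2 "nat \<lfloor>y\<rfloor>"] by blast
  have "real (2^i) \<le> real (nat \<lfloor>y\<rfloor>)" using i(1) of_nat_le_iff by blast
  moreover have "real (nat \<lfloor>y\<rfloor>) \<le> y" using assms by linarith
  ultimately have a: "2^i \<le> y" by (metis of_nat_numeral of_nat_power order_trans)
  have "nat \<lfloor>y\<rfloor> + 1 \<le> 2^(i+1)" using i(2) by simp
  then have "real (nat \<lfloor>y\<rfloor> + 1) \<le> real (2^(i+1))" using of_nat_le_iff by blast
  moreover have "y < real (nat \<lfloor>y\<rfloor> + 1)" using assms by linarith
  ultimately have b: "y < 2^(i+1)" by (metis of_nat_numeral of_nat_power order_less_le_trans)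
  show ?thesis using a b by blast
qed

definition blk :: "nat \<Rightarrow> nat \<Rightarrow> nat set" where
  "blk d l = {l*2^(d+1)..<(l+1)*2^(d+1)}"

definition Bs :: "(real \<Rightarrow> real) \<Rightarrow> nat \<Rightarrow> nat \<Rightarrow> nat \<Rightarrow> real" where
  "Bs f d k l = (\<Sum>i\<in>blk d l. (-1)^i * incr f (d+k) i)"

definition thr :: "real \<Rightarrow> real \<Rightarrow> nat \<Rightarrow> nat \<Rightarrow> real" where
  "thr K eps d r = K * (real d + 1) powr eps * sqrt ((real r + 1) / 4)"

lemma cval:
  fixes d k l :: nat
  assumes "l < 2^k"
  shows "2 powr (real d / 2) * \<bar>2^k * integral (dyad k l) (faber_level f (d+k))\<bar> =
         2 powr (real k / 2 - 1) * \<bar>Bs f d k l\<bar>"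
proof -
  have "2^k * integral (dyad k l) (faber_level f (d+k)) =
      2^k * ((\<Sum>m\<in>{l*2^d..<(l+1)*2^d}. faber_coeff f (d+k) m) / 2^(d+k))"
    using integral_faber_level[of k "d+k" l f] assms by simp
  also have "\<dots> = 2^k / 2^(d+k) * 2 powr (real (d+k) / 2 - 1) * Bs f d k l"
    unfolding block_sum Bs_def blk_def by simp
  also have "2^k / 2^(d+k) = (2::real) powr (- real d)"
    by (simp add: power_add powr_minus divide_simps powr_realpow)
  finally have e: "2^k * integral (dyad k l) (faber_level f (d+k)) =
      2 powr (- real d) * 2 powr (real (d+k) / 2 - 1) * Bs f d k l" .
  have "2 powr (real d / 2) * (2 powr (- real d) * 2 powr (real (d+k) / 2 - 1)) = 2 powr (real k / 2 - 1)"
    by (simp add: powr_add[symmetric] field_simps)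
  then show ?thesis unfolding e by (simp add: abs_mult mult.assoc)
qed

lemma value_bound:
  fixes d k :: nat and K eps t :: real
  assumes K: "0 \<le> K" and t: "0 < t" "t < 1"
    and good: "\<And>i. i \<le> k \<Longrightarrow>
      card {l\<in>{..<2^k}. thr K eps d (k-i) < 2 powr (real k / 2 - 1) * \<bar>Bs f d k l\<bar>} < 2^i"
  shows "2 powr (real d / 2) / (real d + 1) powr eps *
      rearr (dyad_avg k (faber_level f (d+k))) t / sqrt (ln (1 / t) + 1) \<le> K"
proof -
  define L where "L = ln (1/t) + 1"
  have lnpos: "0 < ln (1/t)" using t by simp
  have L1: "1 \<le> L" using lnpos unfolding L_def by simp
  define s where "s = K * (real d + 1) powr eps * sqrt L / 2 powr (real d / 2)"
  have s0: "0 \<le> s" unfolding s_def using K L1 by simp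
  obtain i where ik: "i \<le> k" and ti: "t * 2^k < 2^(i+1)" and ti2: "i = 0 \<or> 2^i \<le> t * 2^k"
  proof (cases "t * 2^k < 1")
    case True
    then show ?thesis using that[of 0] by simp
  next
    case False
    then obtain i where i: "2^i \<le> t * 2^k" "t * 2^k < 2^(i+1)" using dyadic_index[of "t * 2^k"] by auto
    have "t * 2^k < 2^k" using t by simp
    then have "(2::real)^i < 2^k" using i(1) by linarith
    then have "i < k" by (simp add: power_strict_increasing_iff)
    then have "i \<le> k" by simp
    then show ?thesis using that i by blast
  qed
  define r where "r = k - i"
  have rL: "(real r + 1) / 4 \<le> L"
  proof (cases "r = 0")
    case True then show ?thesis using L1 by simp
  next
    case False
    have kir: "k = i + r" using ik r_def by simp
    have "(2::real)^(r-1) * 2^(i+1) = 2^k" proof -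
      have "r - 1 + (i + 1) = k" using False kir by simp
      then show ?thesis by (metis power_add)
    qed
    then have "t * 2^(r-1) * 2^(i+1) < 1 * 2^(i+1)" using ti by (simp add: mult.assoc)
    then have "t * 2^(r-1) < 1" by (simp only: mult_less_cancel_right) simp
    then have "(2::real)^(r-1) < 1/t" using t by (simp add: field_simps)
    then have "ln (2^(r-1)) < ln (1/t)" using t by (simp add: ln_less_cancel_iff)
    then have "real (r-1) * ln 2 < ln (1/t)" by (simp add: ln_realpow)
    moreover have "real (r-1) * (2/3) \<le> real (r-1) * ln 2" using ln2_ge_two_thirds by (intro mult_left_mono) auto
    ultimately have L23: "real (r-1) * (2/3) + 1 \<le> L" unfolding L_def by linarith
    have "real (r-1) = real r - 1" using False by (simp add: of_nat_diff)
    moreover have "real r \<ge> 1" using False by simp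
    moreover have "(real r + 1)/4 \<le> (real r - 1)*(2/3) + 1" using \<open>1 \<le> real r\<close> by (simp add: field_simps)
    ultimately have "(real r + 1) / 4 \<le> real (r-1) * (2/3) + 1" by simp
    then show ?thesis using L23 by linarith
  qed
  let ?c = "\<lambda>l. 2^k * integral (dyad k l) (faber_level f (d+k))"
  have subs: "{l\<in>{..<2^k}. s < \<bar>?c l\<bar>} \<subseteq>
      {l\<in>{..<2^k}. thr K eps d (k-i) < 2 powr (real k / 2 - 1) * \<bar>Bs f d k l\<bar>}"
  proof safe
    fix l :: nat assume l: "l < 2^k" "s < \<bar>?c l\<bar>"
    have "thr K eps d (k-i) \<le> K * (real d + 1) powr eps * sqrt L"
      unfolding thr_def r_def[symmetric] using K rL by (intro mult_left_mono) auto
    also have "\<dots> = 2 powr (real d / 2) * s" unfolding s_def by simp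
    also have "\<dots> < 2 powr (real d / 2) * \<bar>?c l\<bar>" using l(2) by simp
    also have "\<dots> = 2 powr (real k / 2 - 1) * \<bar>Bs f d k l\<bar>" using cval[OF l(1)] .
    finally show "thr K eps d (k-i) < 2 powr (real k / 2 - 1) * \<bar>Bs f d k l\<bar>" .
  qed
  have "card {l\<in>{..<2^k}. s < \<bar>?c l\<bar>} \<le>
      card {l\<in>{..<2^k}. thr K eps d (k-i) < 2 powr (real k / 2 - 1) * \<bar>Bs f d k l\<bar>}"
    by (rule card_mono[OF _ subs]) simp
  also have "\<dots> < 2^i" using good[OF ik] .
  finally have cnt: "card {l\<in>{..<2^k}. s < \<bar>?c l\<bar>} < 2^i" .
  have "real (card {l\<in>{..<2^k}. s < \<bar>?c l\<bar>}) / 2^k \<le> t"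
  proof (cases "i = 0")
    case True
    then have c0: "card {l\<in>{..<2^k}. s < \<bar>?c l\<bar>} = 0" using cnt by simp
    show ?thesis unfolding c0 using t by simp
  next
    case False
    then have "2^i \<le> t * 2^k" using ti2 by simp
    moreover have "card {l\<in>{..<2^k}. s < \<bar>?c l\<bar>} \<le> 2^i" using cnt by simp
    then have "real (card {l\<in>{..<2^k}. s < \<bar>?c l\<bar>}) \<le> real (2^i)" by (simp only: of_nat_le_iff)
    moreover have "real ((2::nat)^i) = (2::real)^i" by simp
    ultimately have "real (card {l\<in>{..<2^k}. s < \<bar>?c l\<bar>}) \<le> t * 2^k" by linarith
    then show ?thesis by (simp add: divide_le_eq)
  qed
  then have "measure lborel {x\<in>{0..1}. s < \<bar>dyad_avg k (faber_level f (d+k)) x\<bar>} \<le> t"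
    using measure_level_bound[of s k "faber_level f (d+k)"] by linarith
  then have R: "rearr (dyad_avg k (faber_level f (d+k))) t \<le> s" by (rule rearr_le[OF s0])
  have pos: "0 < 2 powr (real d / 2) / (real d + 1) powr eps / sqrt L" using L1 by simp
  have "2 powr (real d / 2) / (real d + 1) powr eps *
      rearr (dyad_avg k (faber_level f (d+k))) t / sqrt L =
      (2 powr (real d / 2) / (real d + 1) powr eps / sqrt L) * rearr (dyad_avg k (faber_level f (d+k))) t"
    by simp
  also have "\<dots> \<le> (2 powr (real d / 2) / (real d + 1) powr eps / sqrt L) * s"
    using R pos by (intro mult_left_mono) auto
  also have "\<dots> = K" unfolding s_def using L1 by (simp add: field_simps)
  finally show ?thesis unfolding L_def .
qed



lemma normal_tail_pointwise:
  fixes \<sigma> u x :: real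
  assumes "0 < \<sigma>" "0 \<le> u" "u < \<bar>x\<bar>"
  shows "normal_density 0 \<sigma> x \<le> sqrt 2 * exp (- u\<^sup>2 / (4 * \<sigma>\<^sup>2)) * normal_density 0 (sqrt 2 * \<sigma>) x"
proof -
  have sq: "(sqrt 2 * \<sigma>)\<^sup>2 = 2 * \<sigma>\<^sup>2" by (simp add: power_mult_distrib)
  have s: "sqrt (2 * pi * (sqrt 2 * \<sigma>)\<^sup>2) = sqrt 2 * sqrt (2 * pi * \<sigma>\<^sup>2)"
    unfolding sq by (simp add: real_sqrt_mult[symmetric] mult.left_commute)
  have "u\<^sup>2 \<le> \<bar>x\<bar>\<^sup>2" using assms(2,3) by (intro power_mono) auto
  then have u2: "u\<^sup>2 \<le> x\<^sup>2" by simp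
  have s4: "0 < 4 * \<sigma>\<^sup>2" using assms(1) by simp
  have ex: "- x\<^sup>2 / (2 * \<sigma>\<^sup>2) \<le> - u\<^sup>2 / (4 * \<sigma>\<^sup>2) + - x\<^sup>2 / (2 * (sqrt 2 * \<sigma>)\<^sup>2)"
  proof -
    have "- x\<^sup>2 / (2 * \<sigma>\<^sup>2) = (- 2 * x\<^sup>2) / (4 * \<sigma>\<^sup>2)" by simp
    also have "\<dots> \<le> (- u\<^sup>2 - x\<^sup>2) / (4 * \<sigma>\<^sup>2)"
      using u2 s4 by (intro divide_right_mono) auto
    also have "\<dots> = - u\<^sup>2 / (4 * \<sigma>\<^sup>2) + - x\<^sup>2 / (2 * (sqrt 2 * \<sigma>)\<^sup>2)"
      unfolding sq by (simp add: diff_divide_distrib)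
    finally show ?thesis .
  qed
  have e: "exp (- x\<^sup>2 / (2 * \<sigma>\<^sup>2)) \<le> exp (- u\<^sup>2 / (4 * \<sigma>\<^sup>2)) * exp (- x\<^sup>2 / (2 * (sqrt 2 * \<sigma>)\<^sup>2))"
    using ex by (simp only: exp_add[symmetric] exp_le_cancel_iff)
  have p: "0 < sqrt (2 * pi * \<sigma>\<^sup>2)" using assms(1) by simp
  have r: "sqrt 2 * exp (- u\<^sup>2 / (4 * \<sigma>\<^sup>2)) * (1 / sqrt (2 * pi * (sqrt 2 * \<sigma>)\<^sup>2) * exp (- (x - 0)\<^sup>2 / (2 * (sqrt 2 * \<sigma>)\<^sup>2)))
     = (exp (- u\<^sup>2 / (4 * \<sigma>\<^sup>2)) * exp (- x\<^sup>2 / (2 * (sqrt 2 * \<sigma>)\<^sup>2))) / sqrt (2 * pi * \<sigma>\<^sup>2)"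
    unfolding s by simp
  have l: "1 / sqrt (2 * pi * \<sigma>\<^sup>2) * exp (- (x - 0)\<^sup>2 / (2 * \<sigma>\<^sup>2)) = exp (- x\<^sup>2 / (2 * \<sigma>\<^sup>2)) / sqrt (2 * pi * \<sigma>\<^sup>2)"
    by simp
  show ?thesis unfolding normal_density_def r l
    using e p by (intro divide_right_mono) auto
qed

lemma (in prob_space) normal_tail:
  assumes X: "distributed M lborel X (\<lambda>x. ennreal (normal_density 0 \<sigma> x))" and \<sigma>: "0 < \<sigma>" and u: "0 \<le> u"
  shows "prob {\<omega>\<in>space M. u < \<bar>X \<omega>\<bar>} \<le> sqrt 2 * exp (- u\<^sup>2 / (4 * \<sigma>\<^sup>2))"
proof -
  let ?A = "{x::real. u < \<bar>x\<bar>}"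
  have A: "?A \<in> sets lborel" by simp
  have eq: "{\<omega>\<in>space M. u < \<bar>X \<omega>\<bar>} = X -` ?A \<inter> space M" by auto
  have "emeasure M (X -` ?A \<inter> space M) = (\<integral>\<^sup>+x. ennreal (normal_density 0 \<sigma> x) * indicator ?A x \<partial>lborel)"
    by (rule distributed_emeasure[OF X A])
  also have "\<dots> \<le> (\<integral>\<^sup>+x. ennreal (sqrt 2 * exp (- u\<^sup>2 / (4 * \<sigma>\<^sup>2))) * ennreal (normal_density 0 (sqrt 2 * \<sigma>) x) \<partial>lborel)"
  proof (intro nn_integral_mono)
    fix x :: real
    show "ennreal (normal_density 0 \<sigma> x) * indicator ?A x \<le>
        ennreal (sqrt 2 * exp (- u\<^sup>2 / (4 * \<sigma>\<^sup>2))) * ennreal (normal_density 0 (sqrt 2 * \<sigma>) x)"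
    proof (cases "u < \<bar>x\<bar>")
      case True
      then show ?thesis using normal_tail_pointwise[OF \<sigma> u True]
        by (simp add: ennreal_mult'[symmetric] ennreal_leI)
    qed simp
  qed
  also have "\<dots> = ennreal (sqrt 2 * exp (- u\<^sup>2 / (4 * \<sigma>\<^sup>2))) * (\<integral>\<^sup>+x. ennreal (normal_density 0 (sqrt 2 * \<sigma>) x) \<partial>lborel)"
    by (rule nn_integral_cmult) simp
  also have "(\<integral>\<^sup>+x. ennreal (normal_density 0 (sqrt 2 * \<sigma>) x) \<partial>lborel) = 1"
    using \<sigma> by (subst nn_integral_eq_integral) (auto intro!: integrable_normal_density integral_normal_density)
  finally have "emeasure M {\<omega>\<in>space M. u < \<bar>X \<omega>\<bar>} \<le> ennreal (sqrt 2 * exp (- u\<^sup>2 / (4 * \<sigma>\<^sup>2)))"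
    unfolding eq by simp
  then show ?thesis unfolding measure_def by (intro enn2real_leI) auto
qed

lemma (in prob_space) count_event:
  fixes X :: "nat \<Rightarrow> 'a \<Rightarrow> real"
  assumes indep: "indep_vars (\<lambda>_. borel) X {..<n}" and A: "A \<in> sets borel"
    and q: "\<And>l. l < n \<Longrightarrow> prob (X l -` A \<inter> space M) \<le> q" and q0: "0 \<le> q" and m: "1 \<le> m"
  defines "E \<equiv> (\<Union>S\<in>{S. S \<subseteq> {..<n} \<and> card S = m}. \<Inter>l\<in>S. X l -` A \<inter> space M)"
  shows "E \<in> events" "prob E \<le> real (n choose m) * q^m"
    "\<And>\<omega>. \<omega> \<in> space M \<Longrightarrow> m \<le> card {l\<in>{..<n}. X l \<omega> \<in> A} \<Longrightarrow> \<omega> \<in> E"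
proof -
  let ?F = "{S. S \<subseteq> {..<n} \<and> card S = m}"
  have finF: "finite ?F" by (rule finite_subset[of _ "Pow {..<n}"]) auto
  have rv: "\<And>l. l < n \<Longrightarrow> X l \<in> borel_measurable M" using indep unfolding indep_vars_def by auto
  have ne: "S \<noteq> {}" if "S \<in> ?F" for S using that m by auto
  have meas: "(\<Inter>l\<in>S. X l -` A \<inter> space M) \<in> events" if "S \<in> ?F" for S
  proof -
    have fS: "finite S" using that finite_subset[of S "{..<n}"] by auto
    show ?thesis
      by (rule sets.finite_INT[OF fS]) (use that ne rv A in \<open>auto intro!: measurable_sets\<close>)
  qed
  show "E \<in> events" unfolding E_def by (rule sets.finite_UN[OF finF]) (use meas in blast)
  have "prob E \<le> (\<Sum>S\<in>?F. prob (\<Inter>l\<in>S. X l -` A \<inter> space M))"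
    unfolding E_def by (rule finite_measure_subadditive_finite[OF finF]) (use meas in blast)
  also have "\<dots> \<le> (\<Sum>S\<in>?F. q^m)"
  proof (rule sum_mono)
    fix S assume S: "S \<in> ?F"
    have fS: "finite S" using S finite_subset[of S "{..<n}"] by auto
    have "prob (\<Inter>l\<in>S. X l -` A \<inter> space M) = (\<Prod>l\<in>S. prob (X l -` A \<inter> space M))"
      by (rule indep_varsD[OF indep]) (use S ne fS A in auto)
    also have "\<dots> \<le> (\<Prod>l\<in>S. q)"
      by (rule prod_mono) (use S q in auto)
    also have "\<dots> = q^m" using S by simp
    finally show "prob (\<Inter>l\<in>S. X l -` A \<inter> space M) \<le> q^m" .
  qed
  also have "\<dots> = real (n choose m) * q^m"
    using n_subsets[of "{..<n}" m] by simp
  finally show "prob E \<le> real (n choose m) * q^m" .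
  fix \<omega> assume \<omega>: "\<omega> \<in> space M" and c: "m \<le> card {l\<in>{..<n}. X l \<omega> \<in> A}"
  obtain S where S: "S \<subseteq> {l\<in>{..<n}. X l \<omega> \<in> A}" "card S = m"
    using obtain_subset_with_card_n[OF c] by metis
  then have "S \<in> ?F" by auto
  moreover have "\<omega> \<in> (\<Inter>l\<in>S. X l -` A \<inter> space M)" using S \<omega> ne[OF \<open>S \<in> ?F\<close>] by auto
  ultimately show "\<omega> \<in> E" unfolding E_def by blast
qed

lemma pow_div_fact_le_exp:
  fixes x :: real assumes "0 \<le> x" shows "x^m / fact m \<le> exp x"
proof -
  have s: "(\<lambda>n. x^n / fact n) sums exp x"
    using exp_converges[of x] by (simp add: divide_inverse mult.commute)
  have "(\<Sum>n\<in>{m}. x^n / fact n) \<le> (\<Sum>n. x^n / fact n)"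
    by (rule sum_le_suminf) (use s assms in \<open>auto simp: sums_iff\<close>)
  then show ?thesis using s by (simp add: sums_iff)
qed

lemma binom_bound:
  assumes "1 \<le> m"
  shows "real (n choose m) \<le> (exp 1 * real n / real m)^m"
proof -
  have "real (n choose m) * fact m \<le> real n ^ m"
    using binomial_fact_pow[of n m] by (metis of_nat_fact of_nat_le_iff of_nat_mult of_nat_power)
  then have "real (n choose m) \<le> real n ^ m / fact m"
    by (simp add: field_simps)
  also have "\<dots> = (real n / real m)^m * (real m ^ m / fact m)"
    using assms by (simp add: power_divide field_simps)
  also have "\<dots> \<le> (real n / real m)^m * exp (real m)"
    by (intro mult_left_mono pow_div_fact_le_exp) auto
  also have "exp (real m) = exp 1 ^ m" by (simp add: exp_of_nat_mult[symmetric])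
  also have "(real n / real m)^m * exp 1 ^ m = (exp 1 * real n / real m)^m"
  proof -
    have "exp 1 * real n / real m = exp 1 * (real n / real m)" by simp
    then show ?thesis by (simp only: power_mult_distrib mult.commute)
  qed
  finally show ?thesis .
qed


lemma event_real_bound:
  fixes K eps :: real and d k i :: nat
  assumes ik: "i \<le> k" and K5: "5 \<le> K" and Keps: "4 \<le> K\<^sup>2 * eps" and eps: "0 < eps"
  shows "real (2^k choose 2^i) * (sqrt 2 * exp (- (thr K eps d (k-i))\<^sup>2))^(2^i)
         \<le> exp 1 * sqrt 2 * exp (- K\<^sup>2/4) / (real d + 1)^2 * (1/2)^k * (1/2)^i"
proof -
  define r where "r = k - i"
  have kir: "k = i + r" using ik r_def by simp
  define m :: nat where "m = 2^i"
  have m1: "1 \<le> m" unfolding m_def by simp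
  have im: "i + 1 \<le> m" unfolding m_def using less_exp[of i] by (simp add: Suc_leI)
  define D where "D = real d + 1"
  have D1: "1 \<le> D" unfolding D_def by simp
  define a where "a = K\<^sup>2 * D powr (2*eps) / 4"
  have thr2: "(thr K eps d r)\<^sup>2 = a * (real r + 1)"
  proof -
    have "(thr K eps d r)\<^sup>2 = K\<^sup>2 * (D powr eps)\<^sup>2 * (sqrt ((real r + 1) / 4))\<^sup>2"
      unfolding thr_def D_def by (simp add: power_mult_distrib)
    also have "(D powr eps)\<^sup>2 = D powr (2*eps)" using D1 by (simp add: powr_power)
    also have "(sqrt ((real r + 1) / 4))\<^sup>2 = (real r + 1) / 4" by simp
    finally show ?thesis unfolding a_def by simp
  qed
  have lnD: "0 \<le> ln D" using D1 by simp
  have "D powr (2*eps) = exp (2*eps * ln D)" using D1 by (simp add: powr_def mult.commute)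
  also have "\<dots> \<ge> 1 + 2*eps * ln D" by (rule exp_ge_add_one_self)
  finally have Dp: "1 + 2*eps*ln D \<le> D powr (2*eps)" .
  have "K\<^sup>2/4 + 2 * ln D \<le> K\<^sup>2/4 + (K\<^sup>2 * eps / 2) * ln D"
    using Keps lnD by (intro add_left_mono mult_right_mono) auto
  also have "\<dots> = K\<^sup>2/4 * (1 + 2*eps*ln D)" by (simp add: algebra_simps)
  also have "\<dots> \<le> K\<^sup>2/4 * D powr (2*eps)" using Dp by (intro mult_left_mono) auto
  finally have aL: "K\<^sup>2/4 + 2 * ln D \<le> a" unfolding a_def by simp
  define y where "y = exp (- a)"
  have y0: "0 \<le> y" unfolding y_def by simp
  have "y \<le> exp (- (K\<^sup>2/4 + 2 * ln D))" unfolding y_def using aL by simp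
  also have "\<dots> = exp (- K\<^sup>2/4) / D^2"
  proof -
    have "exp (2 * ln D) = D^2" using D1 by (simp add: exp_of_nat_mult[of 2, simplified] )
    moreover have "- (K\<^sup>2/4 + 2 * ln D) = - K\<^sup>2/4 - 2 * ln D" by simp
    ultimately show ?thesis by (simp only: exp_diff)
  qed
  finally have yD: "y \<le> exp (- K\<^sup>2/4) / D^2" .
  have "exp (- K\<^sup>2/4) \<le> exp (-6)"
  proof -
    have "5 * 5 \<le> K * K" using K5 by (intro mult_mono) auto
    then have "25 \<le> K\<^sup>2" by (simp add: power2_eq_square)
    then show ?thesis by simp
  qed
  also have "exp (-6::real) \<le> 1/64"
  proof -
    have "(2::real) \<le> exp 1" using exp_ge_add_one_self[of 1] by simp
    then have "(2::real)^6 \<le> exp 1 ^ 6" by (intro power_mono) auto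
    also have "exp 1 ^ 6 = exp (6::real)" by (simp add: exp_of_nat_mult[symmetric])
    finally have "64 \<le> exp (6::real)" by simp
    then show ?thesis by (simp add: exp_minus field_simps)
  qed
  finally have eK: "exp (- K\<^sup>2/4) \<le> 1/64" .
  have D2: "1 \<le> D^2" using D1 by (simp add: one_le_power)
  have "exp (- K\<^sup>2/4) / D^2 \<le> exp (- K\<^sup>2/4)" using D2 by (simp add: divide_le_eq)
  then have yK: "y \<le> exp (- K\<^sup>2/4)" using yD by linarith
  have y64: "y \<le> 1/64" using yK eK by linarith
  define b where "b = exp 1 * sqrt 2 * y"
  have s2: "sqrt 2 \<le> 3/2" by (rule real_le_lsqrt) (auto simp: power2_eq_square)
  have b0: "0 \<le> b" unfolding b_def using y0 by simp
  have "b \<le> 3 * (3/2) * y" unfolding b_def using exp_le s2 y0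
    by (intro mult_right_mono mult_mono) auto
  then have b4: "b \<le> 1/4" using y64 by linarith
  have qeq: "sqrt 2 * exp (- (thr K eps d (k-i))\<^sup>2) = sqrt 2 * y^(r+1)"
  proof -
    have "- (thr K eps d (k-i))\<^sup>2 = real (r+1) * (- a)" unfolding r_def[symmetric] thr2 by (simp add: algebra_simps)
    then show ?thesis unfolding y_def by (simp only: exp_of_nat_mult)
  qed
  have bin: "real (2^k choose 2^i) \<le> (exp 1 * 2^r)^m"
  proof -
    have "real (2^k choose 2^i) \<le> (exp 1 * real (2^k) / real (2^i))^(2^i)"
      by (rule binom_bound) simp
    also have "real ((2::nat)^k) / real ((2::nat)^i) = 2^r" unfolding kir by (simp add: power_add)
    then have "exp 1 * real ((2::nat)^k) / real ((2::nat)^i) = exp 1 * 2^r" by (simp only: times_divide_eq_right[symmetric])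
    finally show ?thesis unfolding m_def .
  qed
  have q0: "0 \<le> (sqrt 2 * y^(r+1))^m" using y0 by simp
  have "real (2^k choose 2^i) * (sqrt 2 * exp (- (thr K eps d (k-i))\<^sup>2))^(2^i)
      = real (2^k choose 2^i) * (sqrt 2 * y^(r+1))^m" unfolding qeq m_def ..
  also have "\<dots> \<le> (exp 1 * 2^r)^m * (sqrt 2 * y^(r+1))^m"
    using bin q0 by (rule mult_right_mono)
  also have "\<dots> = (b * (2*y)^r)^m"
  proof -
    have "(exp 1 * 2^r) * (sqrt 2 * y^(r+1)) = b * (2*y)^r"
      unfolding b_def by (simp add: power_mult_distrib mult_ac)
    then show ?thesis by (simp only: power_mult_distrib[symmetric])
  qed
  also have "\<dots> \<le> (b * (1/2)^r)^m"
    using y64 y0 b0 by (intro power_mono mult_left_mono) auto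
  also have "\<dots> = b^m * ((1/2)^r)^m" by (simp only: power_mult_distrib)
  also have "\<dots> \<le> b^(i+1) * (1/2)^r"
  proof (intro mult_mono)
    show "b^m \<le> b^(i+1)" using im b0 b4 by (intro power_decreasing) auto
    have "((1/2::real)^r)^m \<le> ((1/2)^r)^1" using m1 by (intro power_decreasing) (auto simp: power_le_one)
    then show "((1/2::real)^r)^m \<le> (1/2)^r" by simp
  qed (use b0 in auto)
  also have "b^(i+1) = b * b^i" by simp
  also have "b * b^i * (1/2)^r \<le> b * (1/4)^i * (1/2)^r"
    using b0 b4 by (intro mult_right_mono mult_left_mono power_mono) auto
  also have "b * (1/4)^i * (1/2::real)^r = b * (1/2)^k * (1/2)^i"
  proof -
    have "(1/4::real)^i = (1/2)^i * (1/2)^i" by (simp add: power_mult_distrib[symmetric])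
    moreover have "(1/2::real)^i * (1/2)^r = (1/2)^k" unfolding kir by (simp add: power_add)
    ultimately show ?thesis by (simp add: mult_ac)
  qed
  also have "\<dots> \<le> exp 1 * sqrt 2 * exp (- K\<^sup>2/4) / (real d + 1)^2 * (1/2)^k * (1/2)^i"
  proof -
    have "b \<le> exp 1 * sqrt 2 * (exp (- K\<^sup>2/4) / D^2)" unfolding b_def using yD by (intro mult_left_mono) auto
    then show ?thesis unfolding D_def by (intro mult_right_mono) auto
  qed
  finally show ?thesis .
qed

lemma wiener_prob_space: "wiener_process M W \<Longrightarrow> prob_space M"
  unfolding wiener_process_def by blast

lemma wiener_indep_incr:
  assumes "wiener_process M W"
  shows "prob_space.indep_vars M (\<lambda>_. borel) (\<lambda>i \<omega>. incr (\<lambda>t. W t \<omega>) j i) {..<2^(j+1)}"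
proof -
  define ts :: "nat \<Rightarrow> real" where "ts i = real i / 2^(j+1)" for i
  have "0 \<le> ts 0 \<and> (\<forall>i<2^(j+1). ts i < ts (Suc i))" unfolding ts_def by (simp add: divide_strict_right_mono)
  then have "prob_space.indep_vars M (\<lambda>_. borel) (\<lambda>i \<omega>. W (ts (Suc i)) \<omega> - W (ts i) \<omega>) {..<2^(j+1)}"
    using assms unfolding wiener_process_def by blast
  moreover have "(\<lambda>i \<omega>. W (ts (Suc i)) \<omega> - W (ts i) \<omega>) = (\<lambda>i \<omega>. incr (\<lambda>t. W t \<omega>) j i)"
    unfolding ts_def incr_def by simp
  ultimately show ?thesis by simp
qed

lemma wiener_incr_dist:
  assumes "wiener_process M W"
  shows "distributed M lborel (\<lambda>\<omega>. incr (\<lambda>t. W t \<omega>) j i)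
           (\<lambda>x. ennreal (normal_density 0 (sqrt (1/2^(j+1))) x))"
proof -
  let ?s = "real i / 2^(j+1)" and ?t = "real (i+1) / 2^(j+1)"
  have st: "0 \<le> ?s \<and> ?s < ?t" by (simp add: divide_strict_right_mono)
  have "distributed M lborel (\<lambda>\<omega>. W ?t \<omega> - W ?s \<omega>) (\<lambda>x. ennreal (normal_density 0 (sqrt (?t - ?s)) x))"
    using assms st unfolding wiener_process_def by blast
  moreover have "?t - ?s = 1/2^(j+1)" by (simp add: diff_divide_distrib[symmetric])
  ultimately show ?thesis unfolding incr_def by simp
qed

lemma blk_sub: "l < 2^k \<Longrightarrow> blk d l \<subseteq> {..<2^(d+k+1)}"
proof -
  assume l: "l < 2^k"
  have "(l+1)*2^(d+1) \<le> 2^k * 2^(d+1)" using l by (intro mult_right_mono) auto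
  also have "\<dots> = (2::nat)^(d+k+1)" by (simp add: power_add[symmetric])
  finally show ?thesis unfolding blk_def by auto
qed

lemma blk_disj: "disjoint_family_on (blk d) L"
proof (unfold disjoint_family_on_def, intro ballI impI)
  fix l l' assume "l \<in> L" "l' \<in> L" "l \<noteq> l'"
  show "blk d l \<inter> blk d l' = {}"
  proof (rule ccontr)
    assume "blk d l \<inter> blk d l' \<noteq> {}"
    then obtain x where "x \<in> blk d l" "x \<in> blk d l'" by blast
    then have x: "l*2^(d+1) \<le> x" "x < (l+1)*2^(d+1)" "l'*2^(d+1) \<le> x" "x < (l'+1)*2^(d+1)"
      unfolding blk_def by (simp_all only: atLeastLessThan_iff)
    show False
    proof (cases "l < l'")
      case True
      then have "(l+1)*2^(d+1) \<le> l'*2^(d+1)" by (intro mult_right_mono) auto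
      then show False using x by linarith
    next
      case False
      then have "l' < l" using \<open>l \<noteq> l'\<close> by simp
      then have "(l'+1)*2^(d+1) \<le> l*2^(d+1)" by (intro mult_right_mono) auto
      then show False using x by linarith
    qed
  qed
qed

lemma card_blk: "card (blk d l) = 2^(d+1)"
  unfolding blk_def by (simp add: algebra_simps)

lemma block_indep:
  assumes W: "wiener_process M W"
  shows "prob_space.indep_vars M (\<lambda>_. borel) (\<lambda>l \<omega>. Bs (\<lambda>t. W t \<omega>) d k l) {..<2^k}"
proof -
  interpret prob_space M using wiener_prob_space[OF W] .
  let ?S = "\<lambda>i \<omega>. (-1)^i * incr (\<lambda>t. W t \<omega>) (d+k) i"
  have I: "indep_vars (\<lambda>_. borel) ?S {..<2^(d+k+1)}"
    using indep_vars_compose2[OF wiener_indep_incr[OF W, of "d+k"], where Y="\<lambda>i x. (-1)^i * x" and N="\<lambda>_. borel"]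
    by simp
  have R: "indep_vars (\<lambda>l. PiM (blk d l) (\<lambda>_. borel)) (\<lambda>l \<omega>. restrict (\<lambda>i. ?S i \<omega>) (blk d l)) {..<2^k}"
    by (rule indep_vars_restrict[OF I]) (use blk_sub blk_disj in auto)
  have meas: "(\<lambda>g. \<Sum>i\<in>blk d l. (g i :: real)) \<in> borel_measurable (PiM (blk d l) (\<lambda>_. borel))" for l
    by (rule borel_measurable_sum) (rule measurable_component_singleton)
  have "indep_vars (\<lambda>_. borel) (\<lambda>l \<omega>. \<Sum>i\<in>blk d l. restrict (\<lambda>i. ?S i \<omega>) (blk d l) i) {..<2^k}"
    by (rule indep_vars_compose2[OF R meas])
  moreover have "(\<lambda>l \<omega>. \<Sum>i\<in>blk d l. restrict (\<lambda>i. ?S i \<omega>) (blk d l) i) = (\<lambda>l \<omega>. Bs (\<lambda>t. W t \<omega>) d k l)"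
    unfolding Bs_def by (intro ext sum.cong) auto
  ultimately show ?thesis by simp
qed

lemma block_dist:
  assumes W: "wiener_process M W" and l: "l < 2^k"
  shows "distributed M lborel (\<lambda>\<omega>. Bs (\<lambda>t. W t \<omega>) d k l) (\<lambda>x. ennreal (normal_density 0 (sqrt (1/2^k)) x))"
proof -
  interpret prob_space M using wiener_prob_space[OF W] .
  let ?S = "\<lambda>i \<omega>. (-1)^i * incr (\<lambda>t. W t \<omega>) (d+k) i"
  let ?\<sigma> = "sqrt (1/2^(d+k+1))"
  have I: "indep_vars (\<lambda>_. borel) ?S {..<2^(d+k+1)}"
    using indep_vars_compose2[OF wiener_indep_incr[OF W, of "d+k"], where Y="\<lambda>i x. (-1)^i * x" and N="\<lambda>_. borel"]
    by simp
  have dS: "distributed M lborel (?S i) (\<lambda>x. ennreal (normal_density 0 ?\<sigma> x))" for i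
  proof -
    have "distributed M lborel (\<lambda>\<omega>. 0 + (-1)^i * incr (\<lambda>t. W t \<omega>) (d+k) i)
        (\<lambda>x. ennreal (normal_density (0 + (-1)^i * 0) (\<bar>(-1)^i\<bar> * ?\<sigma>) x))"
      by (rule normal_density_affine[OF wiener_incr_dist[OF W]]) auto
    then show ?thesis by simp
  qed
  have fin: "finite (blk d l)" "blk d l \<noteq> {}" using card_blk[of d l] by (auto simp: blk_def)
  have "distributed M lborel (\<lambda>\<omega>. \<Sum>i\<in>blk d l. ?S i \<omega>)
      (\<lambda>x. ennreal (normal_density (\<Sum>i\<in>blk d l. 0) (sqrt (\<Sum>i\<in>blk d l. ?\<sigma>\<^sup>2)) x))"
    by (rule sum_indep_normal[where \<sigma>="\<lambda>_. ?\<sigma>" and \<mu>="\<lambda>_. 0", OF fin indep_vars_subset[OF I blk_sub[OF l]]]) (simp, rule dS)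
  moreover have "(\<Sum>i\<in>blk d l. ?\<sigma>\<^sup>2) = 1/2^k"
    using card_blk[of d l] by (simp add: power_add)
  ultimately show ?thesis unfolding Bs_def by simp
qed



definition thrA :: "real \<Rightarrow> real \<Rightarrow> nat \<Rightarrow> nat \<Rightarrow> nat \<Rightarrow> real set" where
  "thrA K eps d k i = {x. thr K eps d (k-i) < 2 powr (real k / 2 - 1) * \<bar>x\<bar>}"

definition Ev :: "'a measure \<Rightarrow> (real \<Rightarrow> 'a \<Rightarrow> real) \<Rightarrow> real \<Rightarrow> real \<Rightarrow> nat \<Rightarrow> nat \<Rightarrow> nat \<Rightarrow> 'a set" where
  "Ev M W K eps d k i = (\<Union>S\<in>{S. S \<subseteq> {..<2^k} \<and> card S = 2^i}.
      \<Inter>l\<in>S. (\<lambda>\<omega>. Bs (\<lambda>t. W t \<omega>) d k l) -` thrA K eps d k i \<inter> space M)"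

lemma ev_props:
  assumes W: "wiener_process M W" and ik: "i \<le> k" and K5: "5 \<le> K" and Keps: "4 \<le> K\<^sup>2 * eps" and eps: "0 < eps"
  shows "Ev M W K eps d k i \<in> sets M"
    "measure M (Ev M W K eps d k i) \<le> exp 1 * sqrt 2 * exp (- K\<^sup>2/4) / (real d + 1)^2 * (1/2)^k * (1/2)^i"
    "\<And>\<omega>. \<omega> \<in> space M \<Longrightarrow> \<omega> \<notin> Ev M W K eps d k i \<Longrightarrow>
       card {l\<in>{..<2^k}. thr K eps d (k-i) < 2 powr (real k / 2 - 1) * \<bar>Bs (\<lambda>t. W t \<omega>) d k l\<bar>} < 2^i"
proof -
  interpret prob_space M using wiener_prob_space[OF W] .
  let ?X = "\<lambda>l \<omega>. Bs (\<lambda>t. W t \<omega>) d k l"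
  let ?A = "thrA K eps d k i"
  let ?th = "thr K eps d (k-i)"
  let ?c = "2 powr (real k / 2 - 1) :: real"
  define q where "q = sqrt 2 * exp (- ?th\<^sup>2)"
  have cpos: "0 < ?c" by simp
  have th0: "0 \<le> ?th" unfolding thr_def using K5 by simp
  have A: "?A \<in> sets borel" unfolding thrA_def by simp
  have qb: "prob (?X l -` ?A \<inter> space M) \<le> q" if l: "l < 2^k" for l
  proof -
    have eq: "?X l -` ?A \<inter> space M = {\<omega>\<in>space M. ?th / ?c < \<bar>?X l \<omega>\<bar>}"
      unfolding thrA_def using cpos by (auto simp: pos_divide_less_eq mult.commute)
    have T: "prob {\<omega>\<in>space M. ?th / ?c < \<bar>?X l \<omega>\<bar>} \<le> sqrt 2 * exp (- (?th / ?c)\<^sup>2 / (4 * (sqrt (1/2^k))\<^sup>2))"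
      by (rule normal_tail[OF block_dist[OF W l]]) (use th0 cpos in auto)
    have eqx: "(?th / ?c)\<^sup>2 / (4 * (sqrt (1/2^k))\<^sup>2) = ?th\<^sup>2"
    proof -
      have c2: "?c\<^sup>2 = 2^k / 4"
      proof -
        have "?c\<^sup>2 = 2 powr (2 * (real k / 2 - 1))" by (simp add: powr_power mult.commute)
        also have "2 * (real k / 2 - 1) = real k - 2" by simp
        also have "(2::real) powr (real k - 2) = 2^k / 4" by (simp add: powr_diff powr_realpow)
        finally show ?thesis .
      qed
      have "(?th / ?c)\<^sup>2 / (4 * (sqrt (1/2^k))\<^sup>2) = ?th\<^sup>2 / ?c\<^sup>2 / (4 / 2^k)"
        by (simp add: power_divide)
      also have "\<dots> = ?th\<^sup>2" unfolding c2 by simp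
      finally show ?thesis .
    qed
    have "- (?th / ?c)\<^sup>2 / (4 * (sqrt (1/2^k))\<^sup>2) = - ?th\<^sup>2"
      using eqx by (simp only: minus_divide_left[symmetric])
    then show ?thesis using T unfolding eq q_def by simp
  qed
  have q0: "0 \<le> q" unfolding q_def by simp
  note CE = count_event[OF block_indep[OF W] A qb q0, of "2^i"]
  show "Ev M W K eps d k i \<in> sets M" using CE(1) unfolding Ev_def by simp
  have "measure M (Ev M W K eps d k i) \<le> real (2^k choose 2^i) * q^(2^i)"
    using CE(2) unfolding Ev_def by simp
  also have "\<dots> \<le> exp 1 * sqrt 2 * exp (- K\<^sup>2/4) / (real d + 1)^2 * (1/2)^k * (1/2)^i"
    unfolding q_def by (rule event_real_bound[OF ik K5 Keps eps])
  finally show "measure M (Ev M W K eps d k i) \<le> exp 1 * sqrt 2 * exp (- K\<^sup>2/4) / (real d + 1)^2 * (1/2)^k * (1/2)^i" .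
  fix \<omega> assume \<omega>: "\<omega> \<in> space M" "\<omega> \<notin> Ev M W K eps d k i"
  have "\<not> 2^i \<le> card {l\<in>{..<2^k}. ?X l \<omega> \<in> ?A}"
  proof
    assume c: "2^i \<le> card {l\<in>{..<2^k}. ?X l \<omega> \<in> ?A}"
    have "\<omega> \<in> Ev M W K eps d k i" unfolding Ev_def by (rule CE(3)) (use \<omega>(1) c in auto)
    then show False using \<omega>(2) by simp
  qed
  then show "card {l\<in>{..<2^k}. ?th < ?c * \<bar>Bs (\<lambda>t. W t \<omega>) d k l\<bar>} < 2^i"
    unfolding thrA_def by simp
qed


lemma A_norm_le:
  fixes f :: "real \<Rightarrow> real" and K eps :: real
  assumes K: "0 \<le> K"
    and good: "\<And>d k i. i \<le> k \<Longrightarrow>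
      card {l\<in>{..<2^k}. thr K eps d (k-i) < 2 powr (real k / 2 - 1) * \<bar>Bs f d k l\<bar>} < 2^i"
  shows "A_norm eps f \<le> ereal K"
  unfolding A_norm_def
proof (intro SUP_least)
  fix j k :: nat and t :: real
  assume k: "k \<in> {0..j}" and t: "t \<in> {0<..<1}"
  define d where "d = j - k"
  have jd: "j = d + k" using k d_def by simp
  have rd: "real j - real k = real d" using k d_def by (simp add: of_nat_diff)
  have "2 powr (real d / 2) / (real d + 1) powr eps *
      rearr (dyad_avg k (faber_level f (d+k))) t / sqrt (ln (1 / t) + 1) \<le> K"
    by (rule value_bound[OF K]) (use t good in auto)
  then show "ereal (2 powr ((real j - real k) / 2) / (real j - real k + 1) powr eps *
      rearr (dyad_avg k (faber_level f j)) t / sqrt (ln (1 / t) + 1)) \<le> ereal K"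
    unfolding rd jd[symmetric] by simp
qed

lemma geom_half_sum: "(\<Sum>i\<le>k. (1/2::real)^i) = 2 - (1/2)^k"
  by (induction k) auto

lemma summable_inv_sq: "summable (\<lambda>d::nat. 1 / (real d + 1)^2)"
proof -
  have "summable (\<lambda>n::nat. inverse (real n ^ 2))" by (rule inverse_power_summable) simp
  then have "summable (\<lambda>n::nat. inverse (real (Suc n) ^ 2))" by (subst summable_Suc_iff)
  then show ?thesis by (simp add: inverse_eq_divide add.commute)
qed

lemma bad_bound:
  assumes W: "wiener_process M W" and K5: "5 \<le> K" and Keps: "4 \<le> K\<^sup>2 * eps" and eps: "0 < eps"
  defines "\<gamma> \<equiv> exp 1 * sqrt 2 * exp (- K\<^sup>2/4)"
  shows "(\<Union>d. \<Union>k. \<Union>i\<in>{..k}. Ev M W K eps d k i) \<in> sets M"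
    "emeasure M (\<Union>d. \<Union>k. \<Union>i\<in>{..k}. Ev M W K eps d k i) \<le> ennreal (4 * \<gamma> * (\<Sum>d. 1 / (real d + 1)^2))"
proof -
  interpret prob_space M using wiener_prob_space[OF W] .
  have g0: "0 \<le> \<gamma>" unfolding \<gamma>_def by simp
  have Em: "Ev M W K eps d k i \<in> sets M" if "i \<le> k" for d k i
    by (rule ev_props(1)[OF W that K5 Keps eps])
  have Eb: "measure M (Ev M W K eps d k i) \<le> \<gamma> / (real d + 1)^2 * (1/2)^k * (1/2)^i" if "i \<le> k" for d k i
    using ev_props(2)[OF W that K5 Keps eps, of d] unfolding \<gamma>_def by simp
  have Vm: "(\<Union>i\<in>{..k}. Ev M W K eps d k i) \<in> sets M" for d k
    using Em by (intro sets.finite_UN) auto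
  have Um: "(\<Union>k. \<Union>i\<in>{..k}. Ev M W K eps d k i) \<in> sets M" for d
    using Vm by (intro sets.countable_UN) auto
  show "(\<Union>d. \<Union>k. \<Union>i\<in>{..k}. Ev M W K eps d k i) \<in> sets M"
    using Um by (intro sets.countable_UN) auto
  have Vb: "emeasure M (\<Union>i\<in>{..k}. Ev M W K eps d k i) \<le> ennreal (2 * (\<gamma> / (real d + 1)^2) * (1/2)^k)" for d k
  proof -
    have "emeasure M (\<Union>i\<in>{..k}. Ev M W K eps d k i) \<le> (\<Sum>i\<le>k. emeasure M (Ev M W K eps d k i))"
      by (rule emeasure_subadditive_finite) (use Em in auto)
    also have "\<dots> \<le> (\<Sum>i\<le>k. ennreal (\<gamma> / (real d + 1)^2 * (1/2)^k * (1/2)^i))"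
      by (intro sum_mono) (use Eb in \<open>auto simp: emeasure_eq_measure intro!: ennreal_leI\<close>)
    also have "\<dots> = ennreal (\<Sum>i\<le>k. \<gamma> / (real d + 1)^2 * (1/2)^k * (1/2)^i)"
      using g0 by (intro sum_ennreal) auto
    also have "(\<Sum>i\<le>k. \<gamma> / (real d + 1)^2 * (1/2)^k * (1/2::real)^i) = \<gamma> / (real d + 1)^2 * (1/2)^k * (2 - (1/2)^k)"
      by (subst sum_distrib_left[symmetric]) (simp only: geom_half_sum)
    also have "\<dots> \<le> \<gamma> / (real d + 1)^2 * (1/2)^k * 2"
      using g0 by (intro mult_left_mono) auto
    also have "\<dots> = 2 * (\<gamma> / (real d + 1)^2) * (1/2)^k" by (simp only: mult_ac)
    finally show ?thesis by (simp add: ennreal_leI)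
  qed
  have Ub: "emeasure M (\<Union>k. \<Union>i\<in>{..k}. Ev M W K eps d k i) \<le> ennreal (4 * (\<gamma> / (real d + 1)^2))" for d
  proof -
    have "emeasure M (\<Union>k. \<Union>i\<in>{..k}. Ev M W K eps d k i) \<le> (\<Sum>k. emeasure M (\<Union>i\<in>{..k}. Ev M W K eps d k i))"
      by (rule emeasure_subadditive_countably) (use Vm in auto)
    also have "\<dots> \<le> (\<Sum>k. ennreal (2 * (\<gamma> / (real d + 1)^2) * (1/2)^k))"
      by (intro suminf_le summableI Vb)
    also have "\<dots> = ennreal (\<Sum>k. 2 * (\<gamma> / (real d + 1)^2) * (1/2)^k)"
      using g0 by (intro suminf_ennreal2) (auto intro!: summable_mult summable_geometric)
    also have "(\<Sum>k. 2 * (\<gamma> / (real d + 1)^2) * (1/2::real)^k) = 4 * (\<gamma> / (real d + 1)^2)"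
    proof -
      have "(\<lambda>k. 2 * (\<gamma> / (real d + 1)^2) * (1/2::real)^k) sums (2 * (\<gamma> / (real d + 1)^2) * (1 / (1 - 1/2)))"
        by (intro sums_mult geometric_sums) simp
      then show ?thesis by (simp add: sums_iff)
    qed
    finally show ?thesis .
  qed
  have "emeasure M (\<Union>d. \<Union>k. \<Union>i\<in>{..k}. Ev M W K eps d k i) \<le> (\<Sum>d. emeasure M (\<Union>k. \<Union>i\<in>{..k}. Ev M W K eps d k i))"
    by (rule emeasure_subadditive_countably) (use Um in auto)
  also have "\<dots> \<le> (\<Sum>d. ennreal (4 * (\<gamma> / (real d + 1)^2)))"
    by (intro suminf_le summableI Ub)
  also have "\<dots> = ennreal (\<Sum>d. 4 * (\<gamma> / (real d + 1)^2))"
  proof -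
    have "summable (\<lambda>d. (4*\<gamma>) * (1 / (real d + 1)^2))" by (rule summable_mult[OF summable_inv_sq])
    moreover have "(\<lambda>d. (4*\<gamma>) * (1 / (real d + 1)^2)) = (\<lambda>d. 4 * (\<gamma> / (real d + 1)^2))" by (simp add: fun_eq_iff)
    ultimately have sm: "summable (\<lambda>d. 4 * (\<gamma> / (real d + 1)^2))" by simp
    show ?thesis using g0 sm by (intro suminf_ennreal2) auto
  qed
  also have "(\<Sum>d. 4 * (\<gamma> / (real d + 1)^2)) = 4 * \<gamma> * (\<Sum>d. 1 / (real d + 1)^2)"
  proof -
    have "(\<lambda>d. 4 * \<gamma> * (1 / (real d + 1)^2)) sums (4 * \<gamma> * (\<Sum>d. 1 / (real d + 1)^2))"
      by (intro sums_mult summable_sums summable_inv_sq)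
    then show ?thesis by (simp add: sums_iff)
  qed
  finally show "emeasure M (\<Union>d. \<Union>k. \<Union>i\<in>{..k}. Ev M W K eps d k i) \<le> ennreal (4 * \<gamma> * (\<Sum>d. 1 / (real d + 1)^2))" .
qed


theorem theorem2p8:
  fixes M :: "'a measure" and W :: "real \<Rightarrow> 'a \<Rightarrow> real" and eps :: real
  assumes "wiener_process M W" and "eps > 0"
  shows "AE \<omega> in M. A_norm eps (\<lambda>t. W t \<omega>) < \<infinity>"
proof -
  note W = assms(1) and eps = assms(2)
  interpret prob_space M using wiener_prob_space[OF W] .
  define K0 :: nat where "K0 = max 5 (nat \<lceil>4 / eps\<rceil>)"
  define KK where "KK N = real (N + K0)" for N :: nat
  have K5: "5 \<le> KK N" for N unfolding KK_def K0_def by simp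
  have Keps: "4 \<le> (KK N)\<^sup>2 * eps" for N
  proof -
    have "4 / eps \<le> real (nat \<lceil>4 / eps\<rceil>)" by linarith
    also have "\<dots> \<le> KK N" unfolding KK_def K0_def by simp
    finally have "4 \<le> KK N * eps" using eps by (simp add: divide_le_eq)
    also have "KK N * eps \<le> (KK N)\<^sup>2 * eps"
      using K5[of N] eps by (intro mult_right_mono) (auto simp: power2_eq_square)
    finally show ?thesis .
  qed
  define S where "S = (\<Sum>d. 1 / (real d + 1)^2 :: real)"
  have S0: "0 \<le> S" unfolding S_def by (intro suminf_nonneg summable_inv_sq) auto
  define c where "c = 4 * (exp 1 * sqrt 2) * S"
  have c0: "0 \<le> c" unfolding c_def using S0 by simp
  define Bad where "Bad N = (\<Union>d. \<Union>k. \<Union>i\<in>{..k}. Ev M W (KK N) eps d k i)" for N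
  have Bm: "Bad N \<in> sets M" for N unfolding Bad_def by (rule bad_bound(1)[OF W K5 Keps eps])
  have Bb: "measure M (Bad N) \<le> c / (real N + 1)" for N
  proof -
    have "emeasure M (Bad N) \<le> ennreal (4 * (exp 1 * sqrt 2 * exp (- (KK N)\<^sup>2/4)) * S)"
      unfolding Bad_def S_def by (rule bad_bound(2)[OF W K5 Keps eps])
    then have m1: "measure M (Bad N) \<le> 4 * (exp 1 * sqrt 2 * exp (- (KK N)\<^sup>2/4)) * S"
      using S0 by (simp add: emeasure_eq_measure)
    have "real N + 1 \<le> (KK N)\<^sup>2 / 4 + 1"
    proof -
      have "real N \<le> KK N" unfolding KK_def by simp
      moreover have "KK N \<le> KK N * (KK N / 4)" using K5[of N] by simp
      ultimately show ?thesis by (simp add: power2_eq_square)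
    qed
    also have "\<dots> \<le> exp ((KK N)\<^sup>2 / 4)" using exp_ge_add_one_self[of "(KK N)\<^sup>2 / 4"] by (simp only: add.commute)
    finally have "exp (- (KK N)\<^sup>2/4) \<le> 1 / (real N + 1)"
      by (simp add: exp_minus field_simps)
    then have "4 * (exp 1 * sqrt 2 * exp (- (KK N)\<^sup>2/4)) * S \<le> 4 * (exp 1 * sqrt 2 * (1 / (real N + 1))) * S"
      using S0 by (intro mult_right_mono mult_left_mono) auto
    also have "\<dots> = c / (real N + 1)" unfolding c_def by simp
    finally show ?thesis using m1 by linarith
  qed
  define Z where "Z = (\<Inter>N. Bad N)"
  have Zm: "Z \<in> sets M" unfolding Z_def using Bm by auto
  have Zb: "measure M Z \<le> c / (real N + 1)" for N
  proof -
    have "measure M Z \<le> measure M (Bad N)" unfolding Z_def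
      by (rule finite_measure_mono) (use Bm in auto)
    then show ?thesis using Bb[of N] by linarith
  qed
  have Z0: "measure M Z = 0"
  proof (rule ccontr)
    assume "measure M Z \<noteq> 0"
    then have pos: "0 < measure M Z" by (simp add: order_le_neq_trans)
    obtain N :: nat where "c / measure M Z < real N" using reals_Archimedean2 by blast
    then have "c < real N * measure M Z" using pos by (simp add: divide_less_eq)
    also have "\<dots> < (real N + 1) * measure M Z" using pos by simp
    finally have "c / (real N + 1) < measure M Z" by (simp add: divide_less_eq mult.commute)
    then show False using Zb[of N] by linarith
  qed
  have Znull: "Z \<in> null_sets M" using Zm Z0 by (simp add: null_sets_def emeasure_eq_measure)
  show ?thesis
  proof (rule AE_I'[OF Znull], safe)
    fix \<omega> assume \<omega>: "\<omega> \<in> space M" and nf: "\<not> A_norm eps (\<lambda>t. W t \<omega>) < \<infinity>"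
    show "\<omega> \<in> Z" unfolding Z_def
    proof (rule ccontr)
      assume "\<omega> \<notin> (\<Inter>N. Bad N)"
      then obtain N where nb: "\<omega> \<notin> Bad N" by blast
      have "A_norm eps (\<lambda>t. W t \<omega>) \<le> ereal (KK N)"
      proof (rule A_norm_le)
        show "0 \<le> KK N" using K5[of N] by simp
        fix d k i :: nat assume ik: "i \<le> k"
        have "\<omega> \<notin> Ev M W (KK N) eps d k i" using nb ik unfolding Bad_def by blast
        then show "card {l\<in>{..<2^k}. thr (KK N) eps d (k-i) < 2 powr (real k / 2 - 1) * \<bar>Bs (\<lambda>t. W t \<omega>) d k l\<bar>} < 2^i"
          by (rule ev_props(3)[OF W ik K5 Keps eps \<omega>])
      qed
      then have "A_norm eps (\<lambda>t. W t \<omega>) < \<infinity>" using le_less_trans by fastforce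
      then show False using nf by simp
    qed
  qed
qed

end
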